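(* Let $X_0^*$ be a $\{1,2,\dots\}$-valued random variable with $\mathbf P(X_0^*\ge2)>0$ and $\mathbf E(X_0^*m^{X_0^*})<\infty$, let $p>p_c$, let $X_0$ have law $(1-p)\delta_0+pP_{X_0^*}$, and let $n\ge0$. Then: (i) the functions $s\mapsto \varphi_n(s):=(m-1)sH_n'(s)-H_n(s)$ and $s\mapsto \varphi_n(s)/s$ are non-decreasing on $(0,m]$; (ii) $H_n(m)\le m^{1/(m-1)}\mathrm e^{\delta_n}$; (iii) for all $s\in[1,m]$, $$\frac{H_n(s)^{m-1}}{s}\ge\frac{H_n(m)^{m-1}}{m}\big[1-m(m-s)\,\delta_n\,\mathrm e^{(m-1)\delta_n}\big].$$
   Context: Fix an integer $m\ge2$. Recursive system: $X_{n+1}$ has the law of $(X_{n,1}+\cdots+X_{n,m}-1)^+$, with $X_{n,i}$ independent copies of $X_n$. $p_c:=\frac{1}{1+\mathbf E\{[(m-1)X_0^*-1]m^{X_0^*}\}}$. $H_n(s):=\mathbf E(s^{X_n})$ is the generating function of $X_n$, and $\delta_n:=m(m-1)H_n'(m)-H_n(m)=(m-1)\mathbf E(X_nm^{X_n})-\mathbf E(m^{X_n})$ (which is positive for $p>p_c$). *)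

theory Defs
  imports "HOL-Probability.Probability"
begin

fun iid_sum :: "nat pmf \<Rightarrow> nat \<Rightarrow> nat pmf" where
  "iid_sum mu 0 = return_pmf 0"
| "iid_sum mu (Suc k) = bind_pmf mu (\<lambda>x. map_pmf (\<lambda>y. x + y) (iid_sum mu k))"

text \<open>One step of the recursive system: law of (X_1 + ... + X_m - 1)^+
  (truncated natural-number subtraction is the positive part).\<close>
definition rec_step :: "nat \<Rightarrow> nat pmf \<Rightarrow> nat pmf" where
  "rec_step m mu = map_pmf (\<lambda>x. x - 1) (iid_sum mu m)"

definition rec_law :: "nat \<Rightarrow> nat pmf \<Rightarrow> nat \<Rightarrow> nat pmf" where
  "rec_law m mu0 n = (rec_step m ^^ n) mu0"

definition gen_fun :: "nat pmf \<Rightarrow> real \<Rightarrow> real" where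
  "gen_fun mu s = measure_pmf.expectation mu (\<lambda>k. s ^ k)"

text \<open>Its derivative, H'(s) = E(X s^(X-1)) (termwise derivative of the power series).\<close>
definition gen_fun_deriv :: "nat pmf \<Rightarrow> real \<Rightarrow> real" where
  "gen_fun_deriv mu s = measure_pmf.expectation mu (\<lambda>k. real k * s ^ (k - 1))"

definition p_crit :: "nat \<Rightarrow> nat pmf \<Rightarrow> real" where
  "p_crit m Xs = 1 / (1 + measure_pmf.expectation Xs
      (\<lambda>k. ((real m - 1) * real k - 1) * real m ^ k))"

end

theory Submission imports Defs begin


lemma iid_B:
  fixes c :: real assumes c: "c \<ge> 0"
  shows "(\<integral>\<^sup>+y. ennreal (c ^ y) \<partial>iid_sum \<mu> k) = (\<integral>\<^sup>+y. ennreal (c ^ y) \<partial>\<mu>) ^ k"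
proof (induction k)
  case 0
  then show ?case by simp
next
  case (Suc k)
  have "(\<integral>\<^sup>+y. ennreal (c ^ y) \<partial>iid_sum \<mu> (Suc k))
      = (\<integral>\<^sup>+x. \<integral>\<^sup>+y. ennreal (c ^ x) * ennreal (c ^ y) \<partial>iid_sum \<mu> k \<partial>\<mu>)"
    using c by (simp add: power_add ennreal_mult)
  also have "\<dots> = (\<integral>\<^sup>+x. ennreal (c ^ x) * (\<integral>\<^sup>+y. ennreal (c ^ y) \<partial>iid_sum \<mu> k) \<partial>\<mu>)"
    by (subst nn_integral_cmult) auto
  also have "\<dots> = (\<integral>\<^sup>+x. ennreal (c ^ x) \<partial>\<mu>) * (\<integral>\<^sup>+y. ennreal (c ^ y) \<partial>iid_sum \<mu> k)"
    by (subst nn_integral_multc) auto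
  finally show ?case using Suc by (simp add: mult.commute)
qed

lemma iid_A:
  fixes c :: real assumes c: "c \<ge> 0"
  shows "(\<integral>\<^sup>+y. ennreal (real y * c ^ y) \<partial>iid_sum \<mu> k) =
     of_nat k * (\<integral>\<^sup>+y. ennreal (real y * c ^ y) \<partial>\<mu>) * (\<integral>\<^sup>+y. ennreal (c ^ y) \<partial>\<mu>) ^ (k - 1)"
proof (induction k)
  case 0
  then show ?case by simp
next
  case (Suc k)
  let ?A = "\<integral>\<^sup>+y. ennreal (real y * c ^ y) \<partial>\<mu>"
  let ?B = "\<integral>\<^sup>+y. ennreal (c ^ y) \<partial>\<mu>"
  let ?SA = "\<integral>\<^sup>+y. ennreal (real y * c ^ y) \<partial>iid_sum \<mu> k"
  let ?SB = "\<integral>\<^sup>+y. ennreal (c ^ y) \<partial>iid_sum \<mu> k"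
  have pw: "ennreal (real (x + y) * c ^ (x + y)) = ennreal (real x * c ^ x) * ennreal (c ^ y) + ennreal (c ^ x) * ennreal (real y * c ^ y)" for x y
    using c by (simp add: power_add ennreal_mult[symmetric] ennreal_plus[symmetric] algebra_simps del: ennreal_plus)
  have "(\<integral>\<^sup>+y. ennreal (real y * c ^ y) \<partial>iid_sum \<mu> (Suc k))
      = (\<integral>\<^sup>+x. \<integral>\<^sup>+y. ennreal (real x * c ^ x) * ennreal (c ^ y) + ennreal (c ^ x) * ennreal (real y * c ^ y) \<partial>iid_sum \<mu> k \<partial>\<mu>)"
    by (simp only: pw[symmetric]) simp
  also have "\<dots> = (\<integral>\<^sup>+x. ennreal (real x * c ^ x) * ?SB + ennreal (c ^ x) * ?SA \<partial>\<mu>)"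
    by (subst nn_integral_add) (auto simp: nn_integral_cmult)
  also have "\<dots> = ?A * ?SB + ?B * ?SA"
    by (subst nn_integral_add) (auto simp: nn_integral_multc)
  also have "\<dots> = of_nat (Suc k) * ?A * ?B ^ (Suc k - 1)"
    unfolding Suc iid_B[OF c]
    by (cases k) (auto simp: algebra_simps)
  finally show ?case .
qed

lemma enn2real_pow: "enn2real (x ^ k) = enn2real x ^ k"
  by (induct k) (simp_all add: enn2real_mult)

lemma NB_ge1: fixes c::real and \<mu> :: "nat pmf" assumes "c \<ge> 1"
  shows "1 \<le> (\<integral>\<^sup>+y. ennreal (c ^ y) \<partial>\<mu>)"
proof -
  have "(\<integral>\<^sup>+y. 1 \<partial>\<mu>) \<le> (\<integral>\<^sup>+y. ennreal (c ^ y) \<partial>\<mu>)"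
    by (intro nn_integral_mono) (simp add: assms one_le_power)
  then show ?thesis by (simp add: measure_pmf.emeasure_space_1)
qed

lemma NB_le: fixes c::real and \<mu> :: "nat pmf" assumes c: "c \<ge> 1"
  shows "(\<integral>\<^sup>+y. ennreal (c ^ y) \<partial>\<mu>) \<le> 1 + (\<integral>\<^sup>+y. ennreal (real y * c ^ y) \<partial>\<mu>)"
proof -
  have pw: "c ^ y \<le> 1 + real y * c ^ y" for y
  proof (cases y)
    case 0 then show ?thesis by simp
  next
    case (Suc j)
    have "0 \<le> c ^ y" using c by simp
    then have "c ^ y \<le> real y * c ^ y" using Suc by (simp add: mult_le_cancel_right1)
    then show ?thesis by simp
  qed
  have "(\<integral>\<^sup>+y. ennreal (c ^ y) \<partial>\<mu>) \<le> (\<integral>\<^sup>+y. 1 + ennreal (real y * c ^ y) \<partial>\<mu>)"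
  proof (intro nn_integral_mono)
    fix x
    have "ennreal (c ^ x) \<le> ennreal (1 + real x * c ^ x)" using pw by (rule ennreal_leI)
    also have "\<dots> = 1 + ennreal (real x * c ^ x)" using c by (simp add: ennreal_plus)
    finally show "ennreal (c ^ x) \<le> 1 + ennreal (real x * c ^ x)" .
  qed
  also have "\<dots> = 1 + (\<integral>\<^sup>+y. ennreal (real y * c ^ y) \<partial>\<mu>)"
    by (subst nn_integral_add) auto
  finally show ?thesis .
qed



lemma pw_real:
  fixes M :: real assumes M1: "M \<ge> 1"
  shows "(M - 1) * (real (y - 1) * M ^ (y - 1)) + M ^ y = (M - 1) / M * (real y * M ^ y) + M ^ (y - 1)"
proof (cases y)
  case 0 then show ?thesis by simp
next
  case (Suc j)
  have "(M - 1) / M * (real (Suc j) * M ^ Suc j) = (M - 1) * real (Suc j) * M ^ j"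
    using M1 by simp
  then show ?thesis using Suc by (simp add: algebra_simps)
qed

lemma pw_enn:
  fixes M :: real assumes M1: "M \<ge> 1"
  shows "ennreal ((M - 1) * (real (y - 1) * M ^ (y - 1))) + ennreal (M ^ y)
          = ennreal ((M - 1) / M * (real y * M ^ y)) + ennreal (M ^ (y - 1))"
proof -
  have "ennreal ((M - 1) * (real (y - 1) * M ^ (y - 1))) + ennreal (M ^ y)
     = ennreal ((M - 1) * (real (y - 1) * M ^ (y - 1)) + M ^ y)"
    using M1 by (subst ennreal_plus) auto
  also have "\<dots> = ennreal ((M - 1) / M * (real y * M ^ y) + M ^ (y - 1))"
    using pw_real[OF M1] by simp
  also have "\<dots> = ennreal ((M - 1) / M * (real y * M ^ y)) + ennreal (M ^ (y - 1))"
    using M1 by (subst ennreal_plus) auto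
  finally show ?thesis .
qed

lemma NBf:
  fixes \<mu> :: "nat pmf" and M :: real assumes "M \<ge> 1"
    and "(\<integral>\<^sup>+y. ennreal (real y * M ^ y) \<partial>\<mu>) < \<infinity>"
  shows "(\<integral>\<^sup>+y. ennreal (M ^ y) \<partial>\<mu>) < \<infinity>"
proof -
  have "(\<integral>\<^sup>+y. ennreal (M ^ y) \<partial>\<mu>) \<le> 1 + (\<integral>\<^sup>+y. ennreal (real y * M ^ y) \<partial>\<mu>)"
    by (rule NB_le[OF assms(1)])
  also have "\<dots> < \<infinity>" using assms(2) by (simp add: ennreal_add_less_top)
  finally show ?thesis .
qed



lemma step:
  fixes \<mu> :: "nat pmf" and m :: nat
  assumes hm: "m \<ge> 2" and fin: "(\<integral>\<^sup>+y. ennreal (real y * real m ^ y) \<partial>\<mu>) < \<infinity>"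
  shows "(\<integral>\<^sup>+y. ennreal (real y * real m ^ y) \<partial>rec_step m \<mu>) < \<infinity>"
    and "(real m - 1) * enn2real (\<integral>\<^sup>+y. ennreal (real y * real m ^ y) \<partial>rec_step m \<mu>)
           - enn2real (\<integral>\<^sup>+y. ennreal (real m ^ y) \<partial>rec_step m \<mu>)
         = enn2real (\<integral>\<^sup>+y. ennreal (real m ^ y) \<partial>\<mu>) ^ (m - 1) *
           ((real m - 1) * enn2real (\<integral>\<^sup>+y. ennreal (real y * real m ^ y) \<partial>\<mu>)
             - enn2real (\<integral>\<^sup>+y. ennreal (real m ^ y) \<partial>\<mu>))"
proof -
  define M where "M = real m"
  have M1: "M \<ge> 1" using hm by (simp add: M_def)
  define S where "S = iid_sum \<mu> m"
  define NA where "NA = (\<integral>\<^sup>+y. ennreal (real y * M ^ y) \<partial>\<mu>)"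
  define NB where "NB = (\<integral>\<^sup>+y. ennreal (M ^ y) \<partial>\<mu>)"
  define A' where "A' = (\<integral>\<^sup>+y. ennreal (real (y - 1) * M ^ (y - 1)) \<partial>S)"
  define B' where "B' = (\<integral>\<^sup>+y. ennreal (M ^ (y - 1)) \<partial>S)"
  have NAf: "NA < \<infinity>" using fin by (simp add: NA_def M_def)
  have NBf: "NB < \<infinity>" unfolding NB_def using NBf[OF M1] NAf NA_def by blast
  have SA: "(\<integral>\<^sup>+y. ennreal (real y * M ^ y) \<partial>S) = of_nat m * NA * NB ^ (m - 1)"
    unfolding S_def NA_def NB_def using M1 by (intro iid_A) simp
  have SB: "(\<integral>\<^sup>+y. ennreal (M ^ y) \<partial>S) = NB ^ m"
    unfolding S_def NB_def using M1 by (intro iid_B) simp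
  have SAf: "(\<integral>\<^sup>+y. ennreal (real y * M ^ y) \<partial>S) < \<infinity>"
    unfolding SA using NAf NBf by (simp add: ennreal_mult_less_top power_less_top_ennreal of_nat_less_top)
  have SBf: "(\<integral>\<^sup>+y. ennreal (M ^ y) \<partial>S) < \<infinity>"
    unfolding SB using NBf by (simp add: power_less_top_ennreal)
  have A'e: "(\<integral>\<^sup>+y. ennreal (real y * M ^ y) \<partial>rec_step m \<mu>) = A'"
    by (simp add: rec_step_def S_def A'_def)
  have B'e: "(\<integral>\<^sup>+y. ennreal (M ^ y) \<partial>rec_step m \<mu>) = B'"
    by (simp add: rec_step_def S_def B'_def)
  have pwA: "real (y - 1) * M ^ (y - 1) \<le> real y * M ^ y" for y
    using M1 by (intro mult_mono power_increasing) auto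
  have "A' \<le> (\<integral>\<^sup>+y. ennreal (real y * M ^ y) \<partial>S)"
    unfolding A'_def by (intro nn_integral_mono ennreal_leI pwA)
  then have A'f: "A' < \<infinity>" using SAf by simp
  have "B' \<le> (\<integral>\<^sup>+y. ennreal (M ^ y) \<partial>S)"
    unfolding B'_def using M1 by (intro nn_integral_mono ennreal_leI power_increasing) auto
  then have B'f: "B' < \<infinity>" using SBf by simp
  show "(\<integral>\<^sup>+y. ennreal (real y * real m ^ y) \<partial>rec_step m \<mu>) < \<infinity>"
    using A'e A'f by (simp add: M_def)
  have "(\<integral>\<^sup>+y. ennreal ((M - 1) * (real (y - 1) * M ^ (y - 1))) + ennreal (M ^ y) \<partial>S)
      = (\<integral>\<^sup>+y. ennreal ((M - 1) / M * (real y * M ^ y)) + ennreal (M ^ (y - 1)) \<partial>S)"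
    by (simp only: pw_enn[OF M1])
  also have "(\<integral>\<^sup>+y. ennreal ((M - 1) * (real (y - 1) * M ^ (y - 1))) + ennreal (M ^ y) \<partial>S)
     = ennreal (M - 1) * A' + NB ^ m"
    unfolding A'_def SB[symmetric] using M1
    by (subst nn_integral_add) (auto simp: ennreal_mult nn_integral_cmult)
  also have "(\<integral>\<^sup>+y. ennreal ((M - 1) / M * (real y * M ^ y)) + ennreal (M ^ (y - 1)) \<partial>S)
     = ennreal ((M - 1) / M) * (of_nat m * NA * NB ^ (m - 1)) + B'"
  proof -
    have c: "\<And>y. ennreal ((M - 1) / M * (real y * M ^ y)) = ennreal ((M - 1) / M) * ennreal (real y * M ^ y)"
      using M1 by (intro ennreal_mult) auto
    have "(\<integral>\<^sup>+y. ennreal ((M - 1) / M * (real y * M ^ y)) \<partial>S) = ennreal ((M - 1) / M) * (\<integral>\<^sup>+y. ennreal (real y * M ^ y) \<partial>S)"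
      by (simp only: c) (rule nn_integral_cmult; simp)
    then show ?thesis
      unfolding B'_def SA[symmetric] by (subst nn_integral_add) auto
  qed
  finally have E: "ennreal (M - 1) * A' + NB ^ m = ennreal ((M - 1) / M) * (of_nat m * NA * NB ^ (m - 1)) + B'" .
  have L: "enn2real (ennreal (M - 1) * A' + NB ^ m) = (M - 1) * enn2real A' + enn2real NB ^ m"
    using M1 A'f NBf
    by (subst enn2real_plus) (auto simp: enn2real_mult enn2real_pow ennreal_mult_less_top power_less_top_ennreal)
  have R: "enn2real (ennreal ((M - 1) / M) * (of_nat m * NA * NB ^ (m - 1)) + B')
      = (M - 1) / M * (M * enn2real NA * enn2real NB ^ (m - 1)) + enn2real B'"
    using M1 B'f NBf NAf
    by (subst enn2real_plus) (auto simp: enn2real_mult enn2real_pow ennreal_mult_less_top power_less_top_ennreal of_nat_less_top M_def)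
  have E2: "(M - 1) * enn2real A' + enn2real NB ^ m = (M - 1) * enn2real NA * enn2real NB ^ (m - 1) + enn2real B'"
    using E L R M1 by simp
  have P: "enn2real NB ^ m = enn2real NB * enn2real NB ^ (m - 1)"
    using hm by (cases m) auto
  show "(real m - 1) * enn2real (\<integral>\<^sup>+y. ennreal (real y * real m ^ y) \<partial>rec_step m \<mu>)
           - enn2real (\<integral>\<^sup>+y. ennreal (real m ^ y) \<partial>rec_step m \<mu>)
         = enn2real (\<integral>\<^sup>+y. ennreal (real m ^ y) \<partial>\<mu>) ^ (m - 1) *
           ((real m - 1) * enn2real (\<integral>\<^sup>+y. ennreal (real y * real m ^ y) \<partial>\<mu>)
             - enn2real (\<integral>\<^sup>+y. ennreal (real m ^ y) \<partial>\<mu>))"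
    using A'e B'e E2 P unfolding M_def[symmetric] NA_def[symmetric] NB_def[symmetric]
    by (simp add: algebra_simps)
qed



lemma pmf_series:
  fixes \<mu> :: "nat pmf" and f :: "nat \<Rightarrow> real"
  assumes "integrable \<mu> f"
  shows "(\<lambda>k. pmf \<mu> k * f k) sums measure_pmf.expectation \<mu> f"
proof -
  have i: "integrable (count_space UNIV) (\<lambda>k. pmf \<mu> k * f k)"
    using assms unfolding measure_pmf_eq_density by (subst (asm) integrable_density) auto
  have "measure_pmf.expectation \<mu> f = integral\<^sup>L (count_space UNIV) (\<lambda>k. pmf \<mu> k * f k)"
    unfolding measure_pmf_eq_density by (subst integral_density) auto
  then show ?thesis using sums_integral_count_space_nat[OF i] by simp
qed

lemma pow_le1: fixes c :: real assumes c: "c \<ge> 1" shows "c ^ y \<le> 1 + real y * c ^ y"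
proof (cases y)
  case 0 then show ?thesis by simp
next
  case (Suc j)
  have "0 \<le> c ^ y" using c by simp
  then have "c ^ y \<le> real y * c ^ y" using Suc by (simp add: mult_le_cancel_right1)
  then show ?thesis by simp
qed

lemma pw_mono1:
  fixes M s t :: real assumes M: "M \<ge> 2" and s: "0 < s" "s \<le> t"
  shows "(M - 1) * (real k * s ^ k) - s ^ k \<le> (M - 1) * (real k * t ^ k) - t ^ k"
proof (cases k)
  case 0 then show ?thesis by simp
next
  case (Suc j)
  have c: "(M - 1) * real k - 1 \<ge> 0" using M Suc
    using mult_mono[of 1 "M - 1" 1 "real k"] by simp
  have "((M - 1) * real k - 1) * s ^ k \<le> ((M - 1) * real k - 1) * t ^ k"
    using c s by (intro mult_left_mono power_mono) auto
  then show ?thesis by (simp add: algebra_simps)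
qed

lemma pw_mono2:
  fixes M s t :: real assumes M: "M \<ge> 2" and s: "0 < s" "s \<le> t"
  shows "((M - 1) * (real k * s ^ k) - s ^ k) / s \<le> ((M - 1) * (real k * t ^ k) - t ^ k) / t"
proof (cases k)
  case 0 then show ?thesis using s by (simp add: field_simps)
next
  case (Suc j)
  have c: "(M - 1) * real k - 1 \<ge> 0" using M Suc
    using mult_mono[of 1 "M - 1" 1 "real k"] by simp
  have "((M - 1) * real k - 1) * s ^ j \<le> ((M - 1) * real k - 1) * t ^ j"
    using c s by (intro mult_left_mono power_mono) auto
  moreover have "((M - 1) * (real k * s ^ k) - s ^ k) / s = ((M - 1) * real k - 1) * s ^ j"
    using s Suc by (simp add: field_simps)
  moreover have "((M - 1) * (real k * t ^ k) - t ^ k) / t = ((M - 1) * real k - 1) * t ^ j"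
    using s Suc by (simp add: field_simps)
  ultimately show ?thesis by simp
qed



lemma analytic:
  fixes \<mu> :: "nat pmf" and m :: nat
  assumes hm: "m \<ge> 2" and hint: "integrable \<mu> (\<lambda>k. real k * real m ^ k)"
  defines "H \<equiv> gen_fun \<mu>"
    and "H' \<equiv> gen_fun_deriv \<mu>"
  defines "\<phi> \<equiv> (\<lambda>s. (real m - 1) * s * H' s - H s)"
    and "\<delta> \<equiv> real m * (real m - 1) * H' (real m) - H (real m)"
  assumes h\<delta>: "\<delta> \<ge> 0"
  shows "mono_on {0<..real m} \<phi> \<and> mono_on {0<..real m} (\<lambda>s. \<phi> s / s)
      \<and> H (real m) \<le> real m powr (1 / (real m - 1)) * exp \<delta>
      \<and> (\<forall>s \<in> {1..real m}. H s ^ (m - 1) / s \<ge>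
           H (real m) ^ (m - 1) / real m
             * (1 - real m * (real m - s) * \<delta> * exp ((real m - 1) * \<delta>)))"
proof -
  define M where "M = real m"
  have M2: "M \<ge> 2" and M1: "M \<ge> 1" and M0: "M > 0" using hm by (auto simp: M_def)
  define a where "a = pmf \<mu>"
  have a0: "a k \<ge> 0" for k by (simp add: a_def)
  have iA: "integrable \<mu> (\<lambda>k. real k * M ^ k)" using hint by (simp add: M_def)
  have iB: "integrable \<mu> (\<lambda>k. M ^ k)"
  proof -
    have "integrable \<mu> (\<lambda>k. 1 + real k * M ^ k)" using iA by simp
    then show ?thesis
      by (rule Bochner_Integration.integrable_bound) (auto intro!: AE_I2 simp: pow_le1[OF M1] M0 less_imp_le)
  qed
  have iP: "integrable \<mu> (\<lambda>k. s ^ k)" if "\<bar>s\<bar> \<le> M" for s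
    using iB by (rule Bochner_Integration.integrable_bound) (auto intro!: AE_I2 power_mono simp: power_abs that abs_of_pos[OF M0])
  have iK: "integrable \<mu> (\<lambda>k. real k * s ^ k)" if "\<bar>s\<bar> \<le> M" for s
    using iA by (rule Bochner_Integration.integrable_bound) (auto intro!: AE_I2 mult_left_mono power_mono simp: abs_mult power_abs that abs_of_pos[OF M0])
  have iD: "integrable \<mu> (\<lambda>k. real k * s ^ (k - 1))" if "\<bar>s\<bar> \<le> M" for s
  proof (rule Bochner_Integration.integrable_bound[OF iA])
    show "AE x in \<mu>. norm (real x * s ^ (x - 1)) \<le> norm (real x * M ^ x)"
    proof (intro AE_I2)
      fix x :: nat
      have "\<bar>s\<bar> ^ (x - 1) \<le> M ^ (x - 1)" using that by (intro power_mono) auto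
      also have "\<dots> \<le> M ^ x" using M1 by (intro power_increasing) auto
      finally show "norm (real x * s ^ (x - 1)) \<le> norm (real x * M ^ x)"
        using M0 by (auto simp: abs_mult power_abs intro!: mult_left_mono)
    qed
  qed simp
  have Hs: "(\<lambda>k. a k * s ^ k) sums H s" if "\<bar>s\<bar> \<le> M" for s
    using pmf_series[OF iP[OF that]] by (simp add: a_def H_def gen_fun_def)
  have H's: "(\<lambda>k. a k * (real k * s ^ (k - 1))) sums H' s" if "\<bar>s\<bar> \<le> M" for s
    using pmf_series[OF iD[OF that]] by (simp add: a_def H'_def gen_fun_deriv_def)
  define F where "F = (\<lambda>x. \<Sum>k. a k * x ^ k)"
  have HF: "F s = H s" if "\<bar>s\<bar> \<le> M" for s
    using Hs[OF that] unfolding F_def by (simp add: sums_iff)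
  have sumM: "summable (\<lambda>k. a k * M ^ k)" using Hs[of M] M0 by (simp add: sums_iff)
  have deriv: "(H has_real_derivative H' x) (at x)" if x: "\<bar>x\<bar> < M" for x
  proof -
    have d1: "(F has_field_derivative (\<Sum>n. diffs a n * x ^ n)) (at x)"
      unfolding F_def by (rule termdiffs_strong[OF sumM]) (use x M0 in simp)
    have sd: "summable (\<lambda>n. diffs a n * x ^ n)"
      by (rule termdiff_converges[where K = M]) (use x Hs in \<open>auto simp: sums_iff\<close>)
    have "(\<lambda>n. of_nat n * a n * x ^ (n - Suc 0)) sums (\<Sum>n. diffs a n * x ^ n)"
      by (rule diffs_equiv[OF sd])
    moreover have "(\<lambda>n. of_nat n * a n * x ^ (n - Suc 0)) sums H' x"
      using H's[of x] x by (simp add: algebra_simps)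
    ultimately have "(\<Sum>n. diffs a n * x ^ n) = H' x" by (rule sums_unique2)
    then have "(F has_field_derivative H' x) (at x)" using d1 by simp
    then show ?thesis
      by (rule has_field_derivative_transform_within_open[where S = "{-M<..<M}"]) (use x HF in auto)
  qed
  have contF: "continuous_on {-M..M} F"
  proof -
    have "uniform_limit {-M..M} (\<lambda>n x. \<Sum>i<n. a i * x ^ i) (\<lambda>x. \<Sum>i. a i * x ^ i) sequentially"
    proof (rule Weierstrass_m_test[OF _ sumM])
      fix n and x :: real assume "x \<in> {-M..M}"
      then have "\<bar>x\<bar> ^ n \<le> M ^ n" by (intro power_mono) auto
      then show "norm (a n * x ^ n) \<le> a n * M ^ n"
        using a0[of n] by (simp add: abs_mult power_abs mult_left_mono)
    qed
    then show ?thesis unfolding F_def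
      by (rule uniform_limit_theorem[rotated]) (auto intro!: continuous_intros always_eventually)
  qed
  have contH: "continuous_on {-M..M} H"
  proof -
    have "continuous_on {-M..M} F = continuous_on {-M..M} H"
      by (rule continuous_on_cong) (auto simp: HF)
    then show ?thesis using contF by simp
  qed
  have phi_int: "\<phi> s = measure_pmf.expectation \<mu> (\<lambda>k. (M - 1) * (real k * s ^ k) - s ^ k)"
    if s: "0 < s" "s \<le> M" for s
  proof -
    have sM: "\<bar>s\<bar> \<le> M" using s by simp
    have "\<phi> s = (M - 1) * s * H' s - H s" by (simp add: \<phi>_def M_def)
    also have "\<dots> = measure_pmf.expectation \<mu> (\<lambda>k. (M - 1) * s * (real k * s ^ (k - 1))) - measure_pmf.expectation \<mu> (\<lambda>k. s ^ k)"
      by (simp add: H_def H'_def gen_fun_def gen_fun_deriv_def)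
    also have "\<dots> = measure_pmf.expectation \<mu> (\<lambda>k. (M - 1) * s * (real k * s ^ (k - 1)) - s ^ k)"
      using iD[OF sM] iP[OF sM] by simp
    also have "\<dots> = measure_pmf.expectation \<mu> (\<lambda>k. (M - 1) * (real k * s ^ k) - s ^ k)"
    proof (rule Bochner_Integration.integral_cong[OF refl])
      fix k :: nat
      show "(M - 1) * s * (real k * s ^ (k - 1)) - s ^ k = (M - 1) * (real k * s ^ k) - s ^ k"
        by (cases k) (simp_all add: algebra_simps)
    qed
    finally show ?thesis .
  qed
  have iPsi: "integrable \<mu> (\<lambda>k. (M - 1) * (real k * s ^ k) - s ^ k)" if s: "0 < s" "s \<le> M" for s
    using iK[of s] iP[of s] s by simp
  have mono1: "mono_on {0<..M} \<phi>"
  proof (rule mono_onI)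
    fix s t assume st: "s \<in> {0<..M}" "t \<in> {0<..M}" "s \<le> t"
    show "\<phi> s \<le> \<phi> t"
      using st by (simp add: phi_int iPsi pw_mono1[OF M2] integral_mono)
  qed
  have mono2: "mono_on {0<..M} (\<lambda>s. \<phi> s / s)"
  proof (rule mono_onI)
    fix s t assume st: "s \<in> {0<..M}" "t \<in> {0<..M}" "s \<le> t"
    have "\<phi> s / s = measure_pmf.expectation \<mu> (\<lambda>k. ((M - 1) * (real k * s ^ k) - s ^ k) / s)"
      using st by (simp add: phi_int)
    also have "\<dots> \<le> measure_pmf.expectation \<mu> (\<lambda>k. ((M - 1) * (real k * t ^ k) - t ^ k) / t)"
      using st by (intro integral_mono) (auto simp: iPsi pw_mono2[OF M2])
    also have "\<dots> = \<phi> t / t"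
      using st by (simp add: phi_int)
    finally show "\<phi> s / s \<le> \<phi> t / t" .
  qed
  have H1: "H 1 = 1" by (simp add: H_def gen_fun_def)
  have Hge1: "1 \<le> H x" if "1 \<le> x" "x \<le> M" for x
  proof -
    have "measure_pmf.expectation \<mu> (\<lambda>k. 1) \<le> measure_pmf.expectation \<mu> (\<lambda>k. x ^ k)"
      using that by (intro integral_mono iP) (auto intro: one_le_power)
    then show ?thesis by (simp add: H_def gen_fun_def)
  qed
  have \<delta>M: "\<delta> = \<phi> M" by (simp add: \<delta>_def \<phi>_def M_def algebra_simps)
  define g where "g = (\<lambda>u. (M - 1) * ln (H u) - ln u - u * \<delta> / M)"
  have gdec: "g M \<le> g s" if s: "1 \<le> s" "s \<le> M" for s
  proof (rule DERIV_nonpos_imp_decreasing_open[OF s(2)])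
    fix x assume x: "s < x" "x < M"
    have x1: "1 \<le> x" "x > 0" using x s by auto
    have Hx: "H x \<ge> 1" using Hge1 x1 x by auto
    have dH: "(H has_real_derivative H' x) (at x)" using deriv[of x] x x1 by simp
    have "(g has_real_derivative ((M - 1) * (H' x / H x) - 1 / x - \<delta> / M)) (at x)"
      unfolding g_def using Hx x1 M0
      by (auto intro!: derivative_eq_intros dH simp: field_simps)
    moreover have "(M - 1) * (H' x / H x) - 1 / x - \<delta> / M \<le> 0"
    proof -
      have e: "(M - 1) * (H' x / H x) - 1 / x = (\<phi> x / x) / H x"
        using Hx x1 by (simp add: \<phi>_def M_def field_simps)
      have "\<phi> x / x \<le> \<phi> M / M" using mono2 x1 x M0 by (intro mono_onD[OF mono2]) auto
      also have "\<dots> = \<delta> / M" by (simp add: \<delta>M)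
      finally have le: "\<phi> x / x \<le> \<delta> / M" .
      have "(\<phi> x / x) / H x \<le> \<delta> / M"
      proof (cases "\<phi> x / x \<ge> 0")
        case True
        then have "(\<phi> x / x) / H x \<le> (\<phi> x / x) / 1"
          using Hx by (intro divide_left_mono) auto
        then show ?thesis using le by simp
      next
        case False
        have "(\<phi> x / x) / H x \<le> 0"
          using False Hx divide_nonpos_pos[of "\<phi> x / x" "H x"] by linarith
        also have "0 \<le> \<delta> / M" using h\<delta> M0 by simp
        finally show ?thesis .
      qed
      then show ?thesis using e by simp
    qed
    ultimately show "\<exists>y. (g has_real_derivative y) (at x) \<and> y \<le> 0" by blast
  next
    have "continuous_on {s..M} H" using continuous_on_subset[OF contH, of "{s..M}"] s by auto
    moreover have Hnz: "\<forall>x\<in>{s..M}. H x \<noteq> 0"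
    proof
      fix x assume "x \<in> {s..M}"
      then have "1 \<le> H x" using Hge1 s by auto
      then show "H x \<noteq> 0" by auto
    qed
    ultimately show "continuous_on {s..M} g" unfolding g_def
      using s M0 by (intro continuous_intros) auto
  qed
  have Mm: "real (m - 1) = M - 1" "real (m - Suc 0) = M - 1" using hm by (simp_all add: M_def of_nat_diff)
  have HM: "H M \<ge> 1" using Hge1[of M] M1 by simp
  have ii: "H M \<le> M powr (1 / (M - 1)) * exp \<delta>"
  proof -
    have "(M - 1) * ln (H M) - ln M - M * \<delta> / M \<le> (M - 1) * ln (H 1) - ln 1 - 1 * \<delta> / M"
      using gdec[of 1] M1 by (simp add: g_def)
    then have "(M - 1) * ln (H M) \<le> ln M + \<delta> - \<delta> / M" using H1 M0 by simp
    also have "\<dots> \<le> ln M + (M - 1) * \<delta>"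
    proof -
      have "\<delta> / M \<ge> 0" using h\<delta> M0 by simp
      moreover have "\<delta> \<le> (M - 1) * \<delta>" using h\<delta> M2 by (simp add: mult_le_cancel_right1)
      ultimately show ?thesis by simp
    qed
    finally have "(M - 1) * ln (H M) \<le> ln M + (M - 1) * \<delta>" .
    then have "ln (H M) \<le> ln M / (M - 1) + \<delta>" using M2 by (simp add: field_simps)
    then have "exp (ln (H M)) \<le> exp (ln M / (M - 1) + \<delta>)" by simp
    then show ?thesis using HM M0 by (simp add: powr_def exp_add)
  qed
  have iii: "H s ^ (m - 1) / s \<ge> H M ^ (m - 1) / M * (1 - M * (M - s) * \<delta> * exp ((M - 1) * \<delta>))"
    if s: "s \<in> {1..M}" for s
  proof -
    have s1: "1 \<le> s" "s \<le> M" using s by auto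
    have Hs: "H s \<ge> 1" using Hge1 s1 by auto
    define c where "c = (M - s) * \<delta> / M"
    have c0: "c \<ge> 0" using s1 h\<delta> M0 by (simp add: c_def)
    have "(M - 1) * ln (H M) - ln M - M * \<delta> / M \<le> (M - 1) * ln (H s) - ln s - s * \<delta> / M"
      using gdec[OF s1] by (simp add: g_def)
    moreover have "M * \<delta> / M - s * \<delta> / M = c" by (simp add: c_def field_simps)
    ultimately have L: "(M - 1) * ln (H M) - ln M \<le> (M - 1) * ln (H s) - ln s + c" by simp
    define A where "A = H M ^ (m - 1) / M"
    define B where "B = H s ^ (m - 1) / s"
    have A0: "A > 0" using HM M0 by (simp add: A_def)
    have B0: "B > 0" using Hs s1 by (simp add: B_def)
    have lA: "ln A = (M - 1) * ln (H M) - ln M"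
      using HM M0 by (simp add: A_def ln_div ln_realpow Mm)
    have lB: "ln B = (M - 1) * ln (H s) - ln s"
      using Hs s1 by (simp add: B_def ln_div ln_realpow Mm)
    have "A = exp (ln A)" using A0 by simp
    also have "\<dots> \<le> exp (ln B + c)" using L lA lB by simp
    also have "\<dots> = B * exp c" using B0 by (simp add: exp_add)
    finally have AB: "A \<le> B * exp c" .
    have "A * exp (- c) \<le> B" using AB by (simp add: exp_minus field_simps)
    moreover have "A * (1 - c) \<le> A * exp (- c)"
      using A0 exp_ge_add_one_self[of "- c"] by (intro mult_left_mono) auto
    moreover have "c \<le> M * (M - s) * \<delta> * exp ((M - 1) * \<delta>)"
    proof -
      have x0: "(M - s) * \<delta> \<ge> 0" using s1 h\<delta> by simp
      have "c \<le> (M - s) * \<delta>" unfolding c_def using x0 M1 by (simp add: divide_le_eq mult_le_cancel_left1)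
      also have "\<dots> \<le> (M - s) * \<delta> * (M * exp ((M - 1) * \<delta>))"
      proof -
        have "1 \<le> exp ((M - 1) * \<delta>)" using h\<delta> M1 by simp
        then have "1 \<le> M * exp ((M - 1) * \<delta>)" using M1
          by (metis mult_mono mult_1 order.trans zero_le_one exp_ge_zero)
        then show ?thesis using x0 by (simp add: mult_le_cancel_left1)
      qed
      finally show ?thesis by (simp add: algebra_simps)
    qed
    then have "A * (1 - M * (M - s) * \<delta> * exp ((M - 1) * \<delta>)) \<le> A * (1 - c)"
      using A0 by (intro mult_left_mono) auto
    ultimately show ?thesis unfolding A_def B_def by linarith
  qed
  show ?thesis using mono1 mono2 ii iii unfolding M_def by auto
qed

lemma link:
  fixes \<mu> :: "nat pmf" and m :: nat
  assumes fin: "(\<integral>\<^sup>+y. ennreal (real y * real m ^ y) \<partial>\<mu>) < \<infinity>"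
  shows "integrable \<mu> (\<lambda>k. real k * real m ^ k)"
    and "real m * (real m - 1) * gen_fun_deriv \<mu> (real m) - gen_fun \<mu> (real m)
         = (real m - 1) * enn2real (\<integral>\<^sup>+y. ennreal (real y * real m ^ y) \<partial>\<mu>)
           - enn2real (\<integral>\<^sup>+y. ennreal (real m ^ y) \<partial>\<mu>)"
proof -
  show "integrable \<mu> (\<lambda>k. real k * real m ^ k)"
    using fin by (subst integrable_iff_bounded) simp
  have "gen_fun \<mu> (real m) = enn2real (\<integral>\<^sup>+y. ennreal (real m ^ y) \<partial>\<mu>)"
    unfolding gen_fun_def by (rule integral_eq_nn_integral) auto
  moreover have "real m * gen_fun_deriv \<mu> (real m) = enn2real (\<integral>\<^sup>+y. ennreal (real y * real m ^ y) \<partial>\<mu>)"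
  proof -
    have "real m * gen_fun_deriv \<mu> (real m) = measure_pmf.expectation \<mu> (\<lambda>k. real m * (real k * real m ^ (k - 1)))"
      by (simp add: gen_fun_deriv_def)
    also have "\<dots> = measure_pmf.expectation \<mu> (\<lambda>k. real k * real m ^ k)"
    proof (rule Bochner_Integration.integral_cong[OF refl])
      fix k :: nat
      show "real m * (real k * real m ^ (k - 1)) = real k * real m ^ k"
        by (cases k) simp_all
    qed
    also have "\<dots> = enn2real (\<integral>\<^sup>+y. ennreal (real y * real m ^ y) \<partial>\<mu>)"
      by (rule integral_eq_nn_integral) auto
    finally show ?thesis .
  qed
  ultimately show "real m * (real m - 1) * gen_fun_deriv \<mu> (real m) - gen_fun \<mu> (real m)
         = (real m - 1) * enn2real (\<integral>\<^sup>+y. ennreal (real y * real m ^ y) \<partial>\<mu>)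
           - enn2real (\<integral>\<^sup>+y. ennreal (real m ^ y) \<partial>\<mu>)"
    by (simp add: algebra_simps)
qed

lemma X0_nn:
  fixes X0 Xs :: "nat pmf" and p :: real and f :: "nat \<Rightarrow> ennreal"
  assumes hX0: "\<And>k. pmf X0 k = (1 - p) * (if k = 0 then 1 else 0) + p * pmf Xs k"
    and p: "0 \<le> p" "p \<le> 1"
  shows "(\<integral>\<^sup>+k. f k \<partial>X0) = ennreal (1 - p) * f 0 + ennreal p * (\<integral>\<^sup>+k. f k \<partial>Xs)"
proof -
  have pw: "ennreal (pmf X0 k) * f k = ennreal (1 - p) * (f 0 * indicator {0} k) + ennreal p * (ennreal (pmf Xs k) * f k)" for k
    using p by (cases "k = 0") (simp_all add: hX0 ennreal_plus ennreal_mult distrib_right mult.assoc)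
  have "(\<integral>\<^sup>+k. f k \<partial>X0) = (\<integral>\<^sup>+k. ennreal (pmf X0 k) * f k \<partial>count_space UNIV)"
    by (rule nn_integral_measure_pmf)
  also have "\<dots> = (\<integral>\<^sup>+k. ennreal (1 - p) * (f 0 * indicator {0} k) + ennreal p * (ennreal (pmf Xs k) * f k) \<partial>count_space UNIV)"
    by (simp only: pw)
  also have "\<dots> = ennreal (1 - p) * (\<integral>\<^sup>+k. f 0 * indicator {0} k \<partial>count_space UNIV)
      + ennreal p * (\<integral>\<^sup>+k. ennreal (pmf Xs k) * f k \<partial>count_space UNIV)"
    by (subst nn_integral_add) (auto simp: nn_integral_cmult)
  also have "(\<integral>\<^sup>+k. f 0 * indicator {0} k \<partial>count_space UNIV) = f 0"
    by (subst nn_integral_cmult_indicator) auto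
  also have "(\<integral>\<^sup>+k. ennreal (pmf Xs k) * f k \<partial>count_space UNIV) = (\<integral>\<^sup>+k. f k \<partial>Xs)"
    by (rule nn_integral_measure_pmf[symmetric])
  finally show ?thesis .
qed

theorem lemma3p2:
  fixes m :: nat and Xs X0 :: "nat pmf" and p :: real and n :: nat
  assumes hm: "m \<ge> 2"
    and hpos: "pmf Xs 0 = 0"
    and hge2: "measure_pmf.prob Xs {2..} > 0"
    and hint: "integrable (measure_pmf Xs) (\<lambda>k. real k * real m ^ k)"
    and hp: "p_crit m Xs < p" "p \<le> 1"
    and hX0: "\<And>k. pmf X0 k = (1 - p) * (if k = 0 then 1 else 0) + p * pmf Xs k"
  defines "H \<equiv> gen_fun (rec_law m X0 n)"
    and "H' \<equiv> gen_fun_deriv (rec_law m X0 n)"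
  defines "\<phi> \<equiv> (\<lambda>s. (real m - 1) * s * H' s - H s)"
    and "\<delta> \<equiv> real m * (real m - 1) * H' (real m) - H (real m)"
  shows "mono_on {0<..real m} \<phi> \<and> mono_on {0<..real m} (\<lambda>s. \<phi> s / s)
      \<and> H (real m) \<le> real m powr (1 / (real m - 1)) * exp \<delta>
      \<and> (\<forall>s \<in> {1..real m}. H s ^ (m - 1) / s \<ge>
           H (real m) ^ (m - 1) / real m
             * (1 - real m * (real m - s) * \<delta> * exp ((real m - 1) * \<delta>)))"
proof -
  define M where "M = real m"
  have M1: "M \<ge> 1" and M0: "M > 0" using hm by (auto simp: M_def)
  define NA where "NA = (\<lambda>\<mu>::nat pmf. \<integral>\<^sup>+y. ennreal (real y * real m ^ y) \<partial>\<mu>)"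
  define NB where "NB = (\<lambda>\<mu>::nat pmf. \<integral>\<^sup>+y. ennreal (real m ^ y) \<partial>\<mu>)"
  define D where "D = (\<lambda>\<mu>. (real m - 1) * enn2real (NA \<mu>) - enn2real (NB \<mu>))"
  define E where "E = measure_pmf.expectation Xs (\<lambda>k. ((real m - 1) * real k - 1) * real m ^ k)"
  have NAs: "NA Xs < \<infinity>" using hint by (simp add: integrable_iff_bounded NA_def)
  have NBs: "NB Xs < \<infinity>" using NBf[of "real m" Xs] NAs hm by (simp add: NA_def NB_def)
  have iB: "integrable Xs (\<lambda>k. real m ^ k)" using NBs by (simp add: integrable_iff_bounded NB_def)
  have as: "measure_pmf.expectation Xs (\<lambda>k. real k * real m ^ k) = enn2real (NA Xs)"
    unfolding NA_def by (rule integral_eq_nn_integral) auto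
  have bs: "measure_pmf.expectation Xs (\<lambda>k. real m ^ k) = enn2real (NB Xs)"
    unfolding NB_def by (rule integral_eq_nn_integral) auto
  have "E = measure_pmf.expectation Xs (\<lambda>k. (real m - 1) * (real k * real m ^ k) - real m ^ k)"
    unfolding E_def by (rule Bochner_Integration.integral_cong[OF refl]) (simp add: algebra_simps)
  also have "\<dots> = (real m - 1) * enn2real (NA Xs) - enn2real (NB Xs)"
    using hint iB as bs by simp
  finally have Eeq: "E = (real m - 1) * enn2real (NA Xs) - enn2real (NB Xs)" .
  have E0: "E \<ge> 0"
    unfolding E_def
  proof (rule integral_nonneg_AE, rule AE_pmfI)
    fix y assume "y \<in> set_pmf Xs"
    then have "pmf Xs y \<noteq> 0" by (simp add: set_pmf_iff)
    then have "y \<noteq> 0" using hpos by (cases y) auto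
    then have "1 \<le> real y" by simp
    moreover have "1 \<le> real m - 1" using hm by simp
    ultimately have "1 \<le> (real m - 1) * real y" using mult_mono[of 1 "real m - 1" 1 "real y"] by simp
    then show "0 \<le> ((real m - 1) * real y - 1) * real m ^ y" by simp
  qed
  have pgt: "1 < p * (1 + E)"
  proof -
    have pc: "p_crit m Xs = 1 / (1 + E)" by (simp add: p_crit_def E_def)
    have "1 / (1 + E) < p" using hp(1) pc by simp
    then have "1 < p * (1 + E)" using E0 by (simp add: divide_less_eq)
    then show ?thesis .
  qed
  have p0: "0 \<le> p" using pgt E0
    by (metis less_le_not_le mult_nonpos_nonneg not_le_imp_less order.trans zero_le_one add_nonneg_nonneg)
  have NA0: "NA X0 = ennreal p * NA Xs"
    unfolding NA_def by (subst X0_nn[OF hX0 p0 hp(2)]) simp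
  have NB0: "NB X0 = ennreal (1 - p) + ennreal p * NB Xs"
    unfolding NB_def by (subst X0_nn[OF hX0 p0 hp(2)]) simp
  have NA0f: "NA X0 < \<infinity>" unfolding NA0 using NAs by (simp add: ennreal_mult_less_top)
  have "enn2real (NB X0) = (1 - p) + p * enn2real (NB Xs)"
    unfolding NB0 using NBs hp(2) p0
    by (subst enn2real_plus) (auto simp: enn2real_mult ennreal_mult_less_top)
  moreover have "enn2real (NA X0) = p * enn2real (NA Xs)"
    unfolding NA0 using p0 by (simp add: enn2real_mult)
  ultimately have "D X0 = p * (1 + E) - 1" unfolding D_def Eeq by (simp add: algebra_simps)
  then have base: "NA X0 < \<infinity> \<and> D X0 > 0" using NA0f pgt by simp
  have stepP: "NA (rec_step m \<mu>) < \<infinity> \<and> D (rec_step m \<mu>) > 0" if "NA \<mu> < \<infinity>" "D \<mu> > 0" for \<mu>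
  proof -
    have f: "(\<integral>\<^sup>+y. ennreal (real y * real m ^ y) \<partial>\<mu>) < \<infinity>" using that by (simp add: NA_def)
    have nb1: "1 \<le> NB \<mu>" unfolding NB_def using hm by (intro NB_ge1) simp
    have nbf: "NB \<mu> < \<infinity>" unfolding NB_def using NBf[of "real m" \<mu>] f hm by simp
    have "enn2real 1 \<le> enn2real (NB \<mu>)" using nb1 nbf by (intro enn2real_mono) auto
    then have b1: "enn2real (NB \<mu>) \<ge> 1" by simp
    have "D (rec_step m \<mu>) = enn2real (NB \<mu>) ^ (m - 1) * D \<mu>"
      using step(2)[OF hm f] by (simp add: D_def NA_def NB_def)
    moreover have "enn2real (NB \<mu>) ^ (m - 1) > 0" using b1 by simp
    ultimately have "D (rec_step m \<mu>) > 0" using that(2) by simp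
    moreover have "NA (rec_step m \<mu>) < \<infinity>" using step(1)[OF hm f] by (simp add: NA_def)
    ultimately show ?thesis by simp
  qed
  have all: "NA (rec_law m X0 k) < \<infinity> \<and> D (rec_law m X0 k) > 0" for k
  proof (induction k)
    case 0 then show ?case using base by (simp add: rec_law_def)
  next
    case (Suc k)
    have "rec_law m X0 (Suc k) = rec_step m (rec_law m X0 k)" by (simp add: rec_law_def)
    then show ?case using stepP Suc by simp
  qed
  have fin: "(\<integral>\<^sup>+y. ennreal (real y * real m ^ y) \<partial>rec_law m X0 n) < \<infinity>"
    using all[of n] by (simp add: NA_def)
  have dpos: "0 \<le> real m * (real m - 1) * gen_fun_deriv (rec_law m X0 n) (real m) - gen_fun (rec_law m X0 n) (real m)"
    using link(2)[OF fin] all[of n] by (simp add: D_def NA_def NB_def)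
  show ?thesis
    unfolding H_def H'_def \<phi>_def \<delta>_def
    by (rule analytic[OF hm link(1)[OF fin] dpos])
qed

end
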